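(* Algorithm 1, when run on an $n$-dimensional unique sink orientation $\psi$ with starting vertex $v^0 \in Q^n$, needs at most $O(\alpha^\rho)$ vertex evaluations, where $\rho = |r_\psi(v^0)|$ and $1<\alpha < \phi$ is the constant in the running time bound of the Fibonacci Seesaw algorithm ($\phi$ the golden ratio).
   Context: Let $Q^n = 2^{[n]}$ be the vertex set of the $n$-cube, with $u,v$ adjacent iff $|u\oplus v|=1$; faces are $F_{J,v}=\{u : v\oplus u\subseteq J\}$ for $J\subseteq[n]$, of dimension $|J|$. A unique sink orientation (USO) is an orientation of the cube's edges such that every nonempty face has a unique sink (vertex with no outgoing edges within the face). The outmap $s_\psi(v)$ is the set of coordinates $j$ such that the edge $\{v,v\oplus\{j\}\}$ is directed away from $v$. The reachmap is $r_\psi(v)=s_\psi(v)\cup\{j : \exists u \text{ reachable from } v \text{ by a directed path with } j\in s_\psi(u)\}$. A vertex evaluation is an oracle query returning $s_\psi(v)$ for a given $v$. The Fibonacci Seesaw algorithm (Szabó and Welzl) finds the sink of any $k$-dimensional USO (in particular of any $k$-face of $\psi$) using $O(\alpha^k)$ vertex evaluations, for a constant $1<\alpha<\phi=(1+\sqrt5)/2$. Algorithm 1: given a starting vertex $v^0$, set $E^0=\emptyset$ and $j=0$; while $s_\psi(v^j)\neq\emptyset$: pick any $b\in s_\psi(v^j)$, let $v^{j+1}$ be the sink of the face $F_{E^j, v^j\oplus\{b\}}$ computed by the Fibonacci Seesaw algorithm, set $E^{j+1}=E^j\cup\{b\}$ and $j\leftarrow j+1$; it stops when $s_\psi(v^j)=\emptyset$.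 *)

theory Defs
  imports Complex_Main
begin

text \<open>Vertices of the n-cube Q^n are subsets of {..<n} (coordinates 0..n-1).
  An orientation is given by its outmap s.\<close>

definition symdiff :: "nat set \<Rightarrow> nat set \<Rightarrow> nat set" where
  "symdiff u v = (u - v) \<union> (v - u)"

definition cube :: "nat \<Rightarrow> nat set set" where
  "cube n = {v. v \<subseteq> {..<n}}"

definition face :: "nat \<Rightarrow> nat set \<Rightarrow> nat set \<Rightarrow> nat set set" where
  "face n J v = {u \<in> cube n. symdiff v u \<subseteq> J}"

definition is_orientation :: "nat \<Rightarrow> (nat set \<Rightarrow> nat set) \<Rightarrow> bool" where
  "is_orientation n s \<longleftrightarrow>
     (\<forall>v \<in> cube n. s v \<subseteq> {..<n} \<and>
        (\<forall>j<n. j \<in> s v \<longleftrightarrow> j \<notin> s (symdiff v {j})))"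

definition is_sink_of_face :: "(nat set \<Rightarrow> nat set) \<Rightarrow> nat set \<Rightarrow> nat set \<Rightarrow> bool" where
  "is_sink_of_face s J u \<longleftrightarrow> s u \<inter> J = {}"

definition is_uso :: "nat \<Rightarrow> (nat set \<Rightarrow> nat set) \<Rightarrow> bool" where
  "is_uso n s \<longleftrightarrow> is_orientation n s \<and>
     (\<forall>J v. J \<subseteq> {..<n} \<longrightarrow> v \<in> cube n \<longrightarrow>
        (\<exists>!u. u \<in> face n J v \<and> is_sink_of_face s J u))"

definition face_sink :: "nat \<Rightarrow> (nat set \<Rightarrow> nat set) \<Rightarrow> nat set \<Rightarrow> nat set \<Rightarrow> nat set" where
  "face_sink n s J v = (THE u. u \<in> face n J v \<and> is_sink_of_face s J u)"

definition dir_edge :: "nat \<Rightarrow> (nat set \<Rightarrow> nat set) \<Rightarrow> nat set \<Rightarrow> nat set \<Rightarrow> bool" where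
  "dir_edge n s u w \<longleftrightarrow> u \<in> cube n \<and> (\<exists>j \<in> s u. j < n \<and> w = symdiff u {j})"

definition reachmap :: "nat \<Rightarrow> (nat set \<Rightarrow> nat set) \<Rightarrow> nat set \<Rightarrow> nat set" where
  "reachmap n s v = s v \<union> {j. \<exists>u. (dir_edge n s)\<^sup>*\<^sup>* v u \<and> j \<in> s u}"

text \<open>A (partial) run of Algorithm 1 with m completed loop iterations:
  vertices vs 0..vs m, sets Es 0..Es m, chosen coordinates bs 0..bs (m-1).\<close>
definition alg1_run :: "nat \<Rightarrow> (nat set \<Rightarrow> nat set) \<Rightarrow> nat set \<Rightarrow> nat \<Rightarrow>
    (nat \<Rightarrow> nat set) \<Rightarrow> (nat \<Rightarrow> nat set) \<Rightarrow> (nat \<Rightarrow> nat) \<Rightarrow> bool" where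
  "alg1_run n s v0 m vs Es bs \<longleftrightarrow>
     vs 0 = v0 \<and> Es 0 = {} \<and>
     (\<forall>j<m. s (vs j) \<noteq> {} \<and> bs j \<in> s (vs j) \<and>
        vs (Suc j) = face_sink n s (Es j) (symdiff (vs j) {bs j}) \<and>
        Es (Suc j) = insert (bs j) (Es j))"

text \<open>Vertex evaluations made by such a run: one evaluation of s(vs j) for j = 0..m
  (loop tests), plus the evaluations made by the Fibonacci Seesaw calls, where
  cost J v is the number of evaluations the Seesaw uses on the face F_{J,v}.\<close>
definition alg1_evals :: "(nat set \<Rightarrow> nat set \<Rightarrow> nat) \<Rightarrow> nat \<Rightarrow>
    (nat \<Rightarrow> nat set) \<Rightarrow> (nat \<Rightarrow> nat set) \<Rightarrow> (nat \<Rightarrow> nat) \<Rightarrow> nat" where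
  "alg1_evals cost m vs Es bs = Suc m + (\<Sum>j<m. cost (Es j) (symdiff (vs j) {bs j}))"

end

theory Submission
  imports Defs
begin

lemma symdiff_sub_iff: "symdiff u w \<subseteq> J \<longleftrightarrow> u - J = w - J"
  unfolding symdiff_def by blast

lemma face_iff: "w \<in> face n J u \<longleftrightarrow> w \<subseteq> {..<n} \<and> u - J = w - J"
  unfolding face_def cube_def symdiff_sub_iff by auto

lemma flip_cube: "u \<in> cube n \<Longrightarrow> j < n \<Longrightarrow> symdiff u {j} \<in> cube n"
  unfolding cube_def symdiff_def by auto

lemma face_self: "u \<in> cube n \<Longrightarrow> u \<in> face n J u"
  unfolding face_iff cube_def by auto

lemma face_insert_same:
  assumes "w \<in> face n (insert b J) u" "b \<in> w \<longleftrightarrow> b \<in> u"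
  shows "w \<in> face n J u"
proof -
  have "w \<subseteq> {..<n}" "u - insert b J = w - insert b J" using assms(1) unfolding face_iff by auto
  moreover have "u - J = w - J"
  proof
    show "u - J \<subseteq> w - J" using calculation(2) assms(2) by blast
    show "w - J \<subseteq> u - J" using calculation(2) assms(2) by blast
  qed
  ultimately show ?thesis unfolding face_iff by simp
qed

lemma face_insert_diff:
  assumes "w \<in> face n (insert b J) u" "\<not> (b \<in> w \<longleftrightarrow> b \<in> u)" "b \<notin> J"
  shows "w \<in> face n J (symdiff u {b})"
proof -
  have "w \<subseteq> {..<n}" "u - insert b J = w - insert b J" using assms(1) unfolding face_iff by auto
  moreover have "symdiff u {b} - J = w - J"
  proof
    show "symdiff u {b} - J \<subseteq> w - J" using calculation(2) assms(2,3) unfolding symdiff_def by blast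
    show "w - J \<subseteq> symdiff u {b} - J" using calculation(2) assms(2,3) unfolding symdiff_def by blast
  qed
  ultimately show ?thesis unfolding face_iff by simp
qed

lemma uso_unique:
  assumes "is_uso n s" "J \<subseteq> {..<n}" "v \<in> cube n"
    "a \<in> face n J v" "s a \<inter> J = {}" "b \<in> face n J v" "s b \<inter> J = {}"
  shows "a = b"
  using assms unfolding is_uso_def is_sink_of_face_def by blast

lemma uso_exists:
  assumes "is_uso n s" "J \<subseteq> {..<n}" "v \<in> cube n"
  obtains t where "t \<in> face n J v" "s t \<inter> J = {}"
  using assms unfolding is_uso_def is_sink_of_face_def by blast

lemma face_sink_prop:
  assumes "is_uso n s" "J \<subseteq> {..<n}" "v \<in> cube n"
  shows "face_sink n s J v \<in> face n J v \<and> s (face_sink n s J v) \<inter> J = {}"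
proof -
  have "\<exists>!u. u \<in> face n J v \<and> is_sink_of_face s J u"
    using assms unfolding is_uso_def by blast
  from theI'[OF this] show ?thesis
    unfolding face_sink_def is_sink_of_face_def by blast
qed

lemma orient_sub: "is_uso n s \<Longrightarrow> v \<in> cube n \<Longrightarrow> s v \<subseteq> {..<n}"
  unfolding is_uso_def is_orientation_def by blast

lemma reach_cube:
  assumes "(dir_edge n s)\<^sup>*\<^sup>* v u" "v \<in> cube n"
  shows "u \<in> cube n"
  using assms
proof (induction rule: rtranclp_induct)
  case base then show ?case by simp
next
  case (step y z)
  then show ?case unfolding dir_edge_def using flip_cube by blast
qed

lemma reach_sink:
  assumes uso: "is_uso n s" and J: "J \<subseteq> {..<n}"
  shows "\<forall>u \<in> cube n. \<exists>t. t \<in> face n J u \<and> s t \<inter> J = {} \<and> (dir_edge n s)\<^sup>*\<^sup>* u t"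
proof -
  have fin: "finite J" using J finite_subset by blast
  from fin J show ?thesis
  proof (induction J rule: finite_induct)
    case empty
    then show ?case unfolding face_iff cube_def by auto
  next
    case (insert j J)
    have Jn: "J \<subseteq> {..<n}" and jn: "j < n" using insert.prems by auto
    have IH: "\<forall>u \<in> cube n. \<exists>t. t \<in> face n J u \<and> s t \<inter> J = {} \<and> (dir_edge n s)\<^sup>*\<^sup>* u t"
      using insert.IH Jn by blast
    show ?case
    proof
      fix u assume u: "u \<in> cube n"
      obtain t0 where t0: "t0 \<in> face n J u" "s t0 \<inter> J = {}" "(dir_edge n s)\<^sup>*\<^sup>* u t0"
        using IH u by blast
      have t0c: "t0 \<in> cube n" using t0(1) unfolding face_def by auto
      show "\<exists>t. t \<in> face n (insert j J) u \<and> s t \<inter> insert j J = {} \<and> (dir_edge n s)\<^sup>*\<^sup>* u t"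
      proof (cases "j \<in> s t0")
        case False
        then show ?thesis using t0 unfolding face_iff by blast
      next
        case True
        define t1 where "t1 = symdiff t0 {j}"
        have t1c: "t1 \<in> cube n" using flip_cube[OF t0c jn] t1_def by simp
        have e: "dir_edge n s t0 t1" unfolding dir_edge_def t1_def using t0c True jn by blast
        obtain t2 where t2: "t2 \<in> face n J t1" "s t2 \<inter> J = {}" "(dir_edge n s)\<^sup>*\<^sup>* t1 t2"
          using IH t1c by blast
        have r2: "(dir_edge n s)\<^sup>*\<^sup>* u t2"
          using t0(3) e t2(3) by (meson rtranclp.rtrancl_into_rtrancl rtranclp_trans)
        have t2f: "t2 \<in> face n (insert j J) u"
          using t0(1) t2(1) \<open>j \<notin> J\<close> unfolding face_iff t1_def symdiff_def by blast
        show ?thesis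
        proof (cases "j \<in> s t2")
          case False
          then show ?thesis using t2 t2f r2 by blast
        next
          case True2: True
          obtain ts where ts: "ts \<in> face n (insert j J) u" "s ts \<inter> insert j J = {}"
            using uso_exists[OF uso insert.prems u] by blast
          show ?thesis
          proof (cases "j \<in> ts \<longleftrightarrow> j \<in> u")
            case True
            have "ts \<in> face n J u" using ts(1) True unfolding face_iff by blast
            then have "ts = t0" using uso_unique[OF uso Jn u _ _ t0(1,2)] ts(2) by blast
            then show ?thesis using ts(2) \<open>j \<in> s t0\<close> by blast
          next
            case False
            have "ts \<in> face n J t1" using ts(1) t0(1) False \<open>j \<notin> J\<close>
              unfolding face_iff t1_def symdiff_def by blast
            then have "ts = t2" using uso_unique[OF uso Jn t1c _ _ t2(1,2)] ts(2) by blast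
            then show ?thesis using ts(2) True2 by blast
          qed
        qed
      qed
    qed
  qed
qed


lemma run_inv:
  assumes uso: "is_uso n s" and v0: "v0 \<in> cube n" and run: "alg1_run n s v0 m vs Es bs"
  shows "j \<le> m \<Longrightarrow> vs j \<in> cube n \<and> (dir_edge n s)\<^sup>*\<^sup>* v0 (vs j) \<and> s (vs j) \<inter> Es j = {}
      \<and> Es j = bs ` {..<j} \<and> Es j \<subseteq> {..<n} \<and> card (Es j) = j"
proof (induction j)
  case 0
  have "vs 0 = v0" "Es 0 = {}" using run unfolding alg1_run_def by simp_all
  then show ?case using v0 by simp
next
  case (Suc j)
  have jm: "j < m" using Suc.prems by simp
  have IH: "vs j \<in> cube n" "(dir_edge n s)\<^sup>*\<^sup>* v0 (vs j)" "s (vs j) \<inter> Es j = {}"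
      "Es j = bs ` {..<j}" "Es j \<subseteq> {..<n}" "card (Es j) = j"
    using Suc.IH[OF Suc_leD[OF Suc.prems]] by blast+
  have all: "\<forall>j<m. s (vs j) \<noteq> {} \<and> bs j \<in> s (vs j) \<and>
        vs (Suc j) = face_sink n s (Es j) (symdiff (vs j) {bs j}) \<and>
        Es (Suc j) = insert (bs j) (Es j)"
    using run unfolding alg1_run_def by (elim conjE)
  have R0: "s (vs j) \<noteq> {} \<and> bs j \<in> s (vs j) \<and>
        vs (Suc j) = face_sink n s (Es j) (symdiff (vs j) {bs j}) \<and>
        Es (Suc j) = insert (bs j) (Es j)"
    using all[rule_format, OF jm] .
  define b where "b = bs j"
  note R = R0[THEN conjunct2, THEN conjunct1, folded b_def]
    R0[THEN conjunct2, THEN conjunct2, THEN conjunct1, folded b_def]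
    R0[THEN conjunct2, THEN conjunct2, THEN conjunct2, folded b_def]
  define w where "w = symdiff (vs j) {b}"
  have bn: "b < n" using orient_sub[OF uso IH(1)] R(1) by auto
  have bE: "b \<notin> Es j" using IH(3) R(1) by blast
  have wc: "w \<in> cube n" unfolding w_def using flip_cube[OF IH(1) bn] .
  have e: "dir_edge n s (vs j) w" unfolding dir_edge_def w_def using IH(1) R(1) bn by blast
  have fs: "vs (Suc j) \<in> face n (Es j) w" "s (vs (Suc j)) \<inter> Es j = {}"
    using face_sink_prop[OF uso IH(5) wc] R(2)
    unfolding w_def by auto
  obtain t where t: "t \<in> face n (Es j) w" "s t \<inter> Es j = {}" "(dir_edge n s)\<^sup>*\<^sup>* w t"
    using reach_sink[OF uso IH(5)] wc by blast
  have "t = vs (Suc j)" using uso_unique[OF uso IH(5) wc t(1,2) fs] .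
  then have reach: "(dir_edge n s)\<^sup>*\<^sup>* v0 (vs (Suc j))"
    using IH(2) e t(3) by (meson rtranclp.rtrancl_into_rtrancl rtranclp_trans)
  have vc: "vs (Suc j) \<in> cube n" using fs(1) unfolding face_def by auto
  have Eb: "insert b (Es j) \<subseteq> {..<n}" using IH(5) bn by auto
  obtain ts where ts: "ts \<in> face n (insert b (Es j)) (vs j)" "s ts \<inter> insert b (Es j) = {}"
    using uso_exists[OF uso Eb IH(1)] by blast
  have tsE: "s ts \<inter> Es j = {}" using ts(2) by blast
  have "b \<notin> s (vs (Suc j))"
  proof (cases "b \<in> ts \<longleftrightarrow> b \<in> vs j")
    case True
    have f1: "ts \<in> face n (Es j) (vs j)" using face_insert_same[OF ts(1) True] .
    have "ts = vs j" using uso_unique[OF uso IH(5) IH(1) f1 tsE face_self[OF IH(1)] IH(3)] .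
    then have "b \<in> s ts" using R(1) by simp
    then show ?thesis using ts(2) by simp
  next
    case False
    have f2: "ts \<in> face n (Es j) w" unfolding w_def using face_insert_diff[OF ts(1) False bE] .
    have "ts = vs (Suc j)" using uso_unique[OF uso IH(5) wc f2 tsE fs] .
    then show ?thesis using ts(2) by simp
  qed
  then have sink: "s (vs (Suc j)) \<inter> Es (Suc j) = {}" unfolding R(3) using fs(2) by simp
  have img: "Es (Suc j) = bs ` {..<Suc j}" unfolding R(3) IH(4) b_def lessThan_Suc by simp
  have fin: "finite (Es j)" using IH(5) finite_subset by blast
  have card: "card (Es (Suc j)) = Suc j" using R(3) IH(6) bE fin by simp
  have Esub: "Es (Suc j) \<subseteq> {..<n}" using Eb R(3) by simp
  show ?case using vc reach sink img Esub card by (intro conjI)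
qed

theorem theorem19:
  fixes \<alpha> c :: real
  assumes "1 < \<alpha>" and "\<alpha> < (1 + sqrt 5) / 2"
  shows "\<exists>C::real. \<forall>n s v0 (cost :: nat set \<Rightarrow> nat set \<Rightarrow> nat) m vs Es bs.
           is_uso n s \<longrightarrow> v0 \<in> cube n \<longrightarrow>
           (\<forall>J v. J \<subseteq> {..<n} \<longrightarrow> v \<in> cube n \<longrightarrow> real (cost J v) \<le> c * \<alpha> ^ card J) \<longrightarrow>
           alg1_run n s v0 m vs Es bs \<longrightarrow>
           real (alg1_evals cost m vs Es bs) \<le> C * \<alpha> ^ card (reachmap n s v0)"
proof -
  have a1: "\<alpha> - 1 > 0" using assms(1) by simp
  define C where "C = (1 + \<bar>c\<bar>) / (\<alpha> - 1) + 1"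
  show ?thesis
  proof (intro exI[of _ C] allI impI)
    fix n s v0 m vs Es bs and cost :: "nat set \<Rightarrow> nat set \<Rightarrow> nat"
    assume uso: "is_uso n s" and v0: "v0 \<in> cube n"
      and cst: "\<forall>J v. J \<subseteq> {..<n} \<longrightarrow> v \<in> cube n \<longrightarrow> real (cost J v) \<le> c * \<alpha> ^ card J"
      and run: "alg1_run n s v0 m vs Es bs"
    define \<rho> where "\<rho> = card (reachmap n s v0)"
    have inv: "\<And>j. j \<le> m \<Longrightarrow> vs j \<in> cube n \<and> (dir_edge n s)\<^sup>*\<^sup>* v0 (vs j) \<and> s (vs j) \<inter> Es j = {}
      \<and> Es j = bs ` {..<j} \<and> Es j \<subseteq> {..<n} \<and> card (Es j) = j"
      by (rule run_inv[OF uso v0 run])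
    have allr: "\<forall>j<m. s (vs j) \<noteq> {} \<and> bs j \<in> s (vs j) \<and>
        vs (Suc j) = face_sink n s (Es j) (symdiff (vs j) {bs j}) \<and>
        Es (Suc j) = insert (bs j) (Es j)"
      using run unfolding alg1_run_def by (elim conjE)
    have bsin: "bs j \<in> s (vs j)" if "j < m" for j
      using allr[rule_format, OF that] by (elim conjE)
    have rsub: "reachmap n s v0 \<subseteq> {..<n}"
    proof
      fix x assume "x \<in> reachmap n s v0"
      then obtain u where "(dir_edge n s)\<^sup>*\<^sup>* v0 u" "x \<in> s u"
        unfolding reachmap_def by blast
      moreover have "u \<in> cube n" using reach_cube[OF calculation(1) v0] .
      ultimately show "x \<in> {..<n}" using orient_sub[OF uso] by blast
    qed
    have finr: "finite (reachmap n s v0)" using rsub finite_subset by blast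
    have Esub: "Es m \<subseteq> reachmap n s v0"
    proof
      fix x assume "x \<in> Es m"
      then obtain j where j: "j < m" "x = bs j" using inv[OF order_refl] by auto
      have r: "(dir_edge n s)\<^sup>*\<^sup>* v0 (vs j)" using inv[OF less_imp_le[OF j(1)]] by (elim conjE)
      show "x \<in> reachmap n s v0" using r bsin[OF j(1)] j(2) unfolding reachmap_def by blast
    qed
    have "card (Es m) = m" using inv[OF order_refl] by (elim conjE)
    then have m\<rho>: "m \<le> \<rho>" using card_mono[OF finr Esub] \<rho>_def by simp
    have "real (cost {} {}) \<le> c" using cst[rule_format, of "{}" "{}"] by (simp add: cube_def)
    then have c0: "0 \<le> c" using of_nat_0_le_iff[of "cost {} {}"] by linarith
    have costb: "(\<Sum>j<m. real (cost (Es j) (symdiff (vs j) {bs j}))) \<le> (\<Sum>j<m. c * \<alpha> ^ j)"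
    proof (rule sum_mono)
      fix j assume "j \<in> {..<m}"
      then have j: "j < m" by simp
      have ij: "vs j \<in> cube n" "Es j \<subseteq> {..<n}" "card (Es j) = j" using inv[OF less_imp_le[OF j]] by blast+
      have bn: "bs j < n" using bsin[OF j] orient_sub[OF uso ij(1)] by auto
      have "symdiff (vs j) {bs j} \<in> cube n" using flip_cube[OF ij(1) bn] .
      then show "real (cost (Es j) (symdiff (vs j) {bs j})) \<le> c * \<alpha> ^ j"
        using cst[rule_format, OF ij(2)] ij(3) by simp
    qed
    define S where "S = (\<Sum>j<\<rho>. \<alpha> ^ j)"
    have "S = (\<alpha> ^ \<rho> - 1) / (\<alpha> - 1)" unfolding S_def
      by (rule geometric_sum) (use assms(1) in simp)
    then have Seq: "S * (\<alpha> - 1) = \<alpha> ^ \<rho> - 1" using a1 by simp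
    have pos: "\<alpha> ^ \<rho> \<ge> 1" using assms(1) by simp
    have Sm: "(\<Sum>j<m. \<alpha> ^ j) \<le> S" unfolding S_def
      using m\<rho> assms(1) by (intro sum_mono2) auto
    have "(\<Sum>j<\<rho>. (1::real)) \<le> S" unfolding S_def
      by (rule sum_mono) (use assms(1) in simp)
    then have rS: "real \<rho> \<le> S" by simp
    have S0: "S \<le> \<alpha> ^ \<rho> / (\<alpha> - 1)" using Seq a1 by (simp add: field_simps)
    have "real (alg1_evals cost m vs Es bs) \<le> real m + 1 + c * (\<Sum>j<m. \<alpha> ^ j)"
      unfolding alg1_evals_def using costb by (simp add: sum_distrib_left)
    also have "\<dots> \<le> S + 1 + c * S"
      using mult_left_mono[OF Sm c0] rS m\<rho> by linarith
    also have "\<dots> \<le> (1 + c) * (\<alpha> ^ \<rho> / (\<alpha> - 1)) + \<alpha> ^ \<rho>"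
    proof -
      have "(1 + c) * S \<le> (1 + c) * (\<alpha> ^ \<rho> / (\<alpha> - 1))"
        using mult_left_mono[OF S0, of "1 + c"] c0 by simp
      then show ?thesis using pos by (simp add: algebra_simps)
    qed
    also have "\<dots> = C * \<alpha> ^ \<rho>" unfolding C_def using c0 a1 by (simp add: field_simps)
    finally show "real (alg1_evals cost m vs Es bs) \<le> C * \<alpha> ^ card (reachmap n s v0)"
      unfolding \<rho>_def .
  qed
qed

end
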